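(* Let $p\geqslant 5$ be a prime and \[ \varpi_p = \psi\left( \frac{1}{p} \right) + 2p-1 + \gamma + p\left( \log p - \sum_{j=1}^{p} \frac{1}{j} \right). \] Then $(p-1)(1-\gamma)-\log 2-1< \varpi_p < (p-1)(1-\gamma)$.
   Context: $\psi=\Gamma'/\Gamma$ is the digamma function and $\gamma$ the Euler–Mascheroni constant. *)

theory Defs
  imports "HOL-Analysis.Analysis"
begin

definition varpi :: "nat \<Rightarrow> real" where
  "varpi p = Digamma (1 / real p) + 2 * real p - 1 + euler_mascheroni
     + real p * (ln (real p) - (\<Sum>j=1..p. 1 / real j))"

end

theory Submission
  imports Defs
begin

lemma digamma_bound:
  fixes x :: real
  assumes "x > 0"
  shows "Digamma (1 + x) + euler_mascheroni \<le> 2 * x"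
proof -
  have nz: "(1 + x) \<noteq> 0" using assms by simp
  have s1: "(\<lambda>k. inverse (real (Suc k)) - inverse ((1 + x) + real k)) sums (Digamma (1 + x) + euler_mascheroni)"
    using summable_Digamma[OF nz] by (simp add: Digamma_def summable_sums)
  have l0: "(\<lambda>n. inverse (real n + 1)) \<longlonglongrightarrow> 0"
    using LIMSEQ_inverse_real_of_nat by (simp add: add.commute)
  have lim: "(\<lambda>n. 2 * x * inverse (real n + 1)) \<longlonglongrightarrow> 2 * x * 0"
    by (intro tendsto_intros l0)
  have lim': "(\<lambda>n. 2 * x * inverse (real n + 1)) \<longlonglongrightarrow> 0" using lim by simp
  have s2: "(\<lambda>k. 2 * x * inverse (real k + 1) - 2 * x * inverse (real (Suc k) + 1)) sums (2 * x * inverse (real 0 + 1) - 0)"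
    by (rule telescope_sums'[OF lim'])
  have le: "inverse (real (Suc k)) - inverse ((1 + x) + real k)
        \<le> 2 * x * inverse (real k + 1) - 2 * x * inverse (real (Suc k) + 1)" for k
  proof -
    have "inverse (real (Suc k)) - inverse ((1 + x) + real k) = x / ((real k + 1) * (real k + 1 + x))"
      using assms by (simp add: field_simps)
    also have "\<dots> = 2 * x / (2 * ((real k + 1) * (real k + 1 + x)))"
      by simp
    also have "\<dots> \<le> 2 * x / ((real k + 1) * (real k + 2))"
    proof (rule frac_le)
      show "(real k + 1) * (real k + 2) \<le> 2 * ((real k + 1) * (real k + 1 + x))"
      proof -
        have "(real k + 1) * (real k + 2) \<le> (real k + 1) * (2 * (real k + 1 + x))"
          using assms by (intro mult_left_mono) auto
        thus ?thesis by simp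
      qed
    qed (use assms in \<open>simp_all add: add_pos_pos\<close>)
    also have "\<dots> = 2 * x * inverse (real k + 1) - 2 * x * inverse (real (Suc k) + 1)"
      by (simp add: field_simps)
    finally show ?thesis .
  qed
  have "Digamma (1 + x) + euler_mascheroni \<le> 2 * x * inverse (real 0 + 1) - 0"
    by (rule sums_le[OF le s1 s2])
  thus ?thesis by simp
qed

lemma digamma_pos:
  fixes x :: real
  assumes "x > 0"
  shows "Digamma (1 + x) + euler_mascheroni > 0"
  using Digamma_real_strict_mono[of 1 "1 + x"] assms by simp

theorem lemma7p4:
  fixes p :: nat
  assumes "prime p" and "p \<ge> 5"
  shows "(real p - 1) * (1 - euler_mascheroni) - ln 2 - 1 < varpi p
         \<and> varpi p < (real p - 1) * (1 - euler_mascheroni)"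
proof -
  define x where "x = 1 / real p"
  have p0: "real p \<ge> 5" using assms by simp
  have x0: "x > 0" using p0 by (simp add: x_def)
  have dp: "Digamma (1 / real p) = Digamma (1 + x) - real p"
    using Digamma_plus1[of x] x0 by (simp add: x_def add.commute)
  have H: "(\<Sum>j=1..p. 1 / real j) = harm p"
    by (simp add: harm_def inverse_eq_divide)
  have eq: "varpi p - (real p - 1) * (1 - euler_mascheroni)
      = (Digamma (1 + x) + euler_mascheroni) - euler_mascheroni - real p * (harm p - ln (real p) - euler_mascheroni)"
  proof -
    have "varpi p = Digamma (1 / real p) + 2 * real p - 1 + euler_mascheroni
     + real p * (ln (real p) - harm p)" unfolding varpi_def H by simp
    also have "\<dots> = Digamma (1 + x) - real p + 2 * real p - 1 + euler_mascheroni
     + real p * (ln (real p) - harm p)" by (simp only: dp)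
    finally show ?thesis by (simp add: algebra_simps)
  qed
  have b: "euler_mascheroni \<in> {harm p - ln (real (Suc p)) + inverse (real (2*(p+1)))..harm p - ln (real (Suc p)) + inverse (real (2*p))}"
    using euler_mascheroni_bounds[of p] assms by simp
  have l1: "ln (real p + 1) - ln (real p) \<ge> 2 * (real p + 1 - real p) / (real p + (real p + 1))"
    using p0 by (intro ln_inverse_approx_ge) auto
  have l2: "ln (real p + 1) - ln (real p) \<le> 1 / real p"
  proof -
    have "ln (real p + 1) - ln (real p) = ln (1 + 1 / real p)"
    proof -
      have "1 + 1 / real p = (real p + 1) / real p" using p0 by (simp add: field_simps)
      thus ?thesis using p0 by (simp add: ln_div)
    qed
    also have "\<dots> \<le> 1 / real p" using p0 by (intro ln_add_one_self_le_self) auto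
    finally show ?thesis .
  qed
  have A: "real p * (harm p - ln (real p) - euler_mascheroni) \<le> 1"
  proof -
    have "harm p - ln (real p) - euler_mascheroni \<le> 1 / real p"
    proof -
      have "euler_mascheroni \<ge> harm p - ln (real p + 1) + inverse (real (2*(p+1)))"
        using b by (simp add: add.commute)
      moreover have "inverse (real (2*(p+1))) \<ge> 0" by simp
      ultimately show ?thesis using l2 by linarith
    qed
    thus ?thesis using p0 by (simp add: field_simps)
  qed
  have B: "real p * (harm p - ln (real p) - euler_mascheroni) \<ge> real p * (2 / (2 * real p + 1)) - 1/2"
  proof -
    have "harm p - ln (real p) - euler_mascheroni \<ge> 2 / (2 * real p + 1) - 1 / (2 * real p)"
    proof -
      have "euler_mascheroni \<le> harm p - ln (real p + 1) + inverse (real (2*p))"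
        using b by (simp add: add.commute)
      moreover have "inverse (real (2*p)) = 1 / (2 * real p)" by (simp add: inverse_eq_divide)
      moreover have "2 * (real p + 1 - real p) / (real p + (real p + 1)) = 2 / (2 * real p + 1)"
        by (simp add: algebra_simps)
      ultimately show ?thesis using l1 by linarith
    qed
    hence "real p * (harm p - ln (real p) - euler_mascheroni) \<ge> real p * (2 / (2 * real p + 1) - 1 / (2 * real p))"
      using p0 by (intro mult_left_mono) auto
    also have "real p * (2 / (2 * real p + 1) - 1 / (2 * real p)) = real p * (2 / (2 * real p + 1)) - 1/2"
      using p0 by (simp add: right_diff_distrib)
    finally show ?thesis by linarith
  qed
  have C: "2 * x < real p * (2 / (2 * real p + 1)) - 1/2"
  proof -
    have "real p * (2 / (2 * real p + 1)) - 1/2 - 2 * x = (2 * real p * real p - 9 * real p - 4) / (2 * real p * (2 * real p + 1))"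
      using p0 by (simp add: x_def field_simps)
    moreover have "2 * real p * real p - 9 * real p - 4 > 0"
    proof -
      have "real p * (2 * real p - 9) \<ge> 5 * 1" using p0 by (intro mult_mono) auto
      thus ?thesis by (simp add: algebra_simps)
    qed
    moreover have "2 * real p * (2 * real p + 1) > 0" using p0 by simp
    ultimately have "real p * (2 / (2 * real p + 1)) - 1/2 - 2 * x > 0"
      by (metis divide_pos_pos diff_gt_0_iff_gt)
    thus ?thesis by linarith
  qed
  have D1: "Digamma (1 + x) + euler_mascheroni \<le> 2 * x" by (rule digamma_bound[OF x0])
  have D2: "Digamma (1 + x) + euler_mascheroni > 0" by (rule digamma_pos[OF x0])
  have "ln (2::real) \<ge> 2/3" by (rule ln2_ge_two_thirds)
  moreover have "euler_mascheroni < (13/22::real)" by (rule euler_mascheroni_less_13_over_22)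
  moreover have "euler_mascheroni > (0::real)" by (rule euler_mascheroni_pos)
  ultimately show ?thesis using eq A B C D1 D2 by linarith
qed

end
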